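(* Let $\nu\in\mathbb{R}$ and let $(u_1,u_2,u_3)$ satisfy $-\nu<u_3<u_2<u_1$. Put $\gamma=u_1+u_2+u_3+2\nu$. Then for all $i\neq j$ in $\{1,2,3\}$ with $\lambda_i(u_1,u_2,u_3)\neq\lambda_j(u_1,u_2,u_3)$, $$\frac{\partial\lambda_i/\partial u_j}{\lambda_i-\lambda_j}=\frac12\,\frac{(\lambda_i-\gamma)-2(u_i-u_j)}{(\lambda_j-\gamma)(u_i-u_j)}.$$
   Context: For $-\nu<u_3<u_2<u_1$ define $$I(u_1,u_2,u_3)=\int_{u_3}^{u_2}\frac{\eta+\nu}{\sqrt{(\eta+\nu)(u_1-\eta)(u_2-\eta)(\eta-u_3)}}\,d\eta,$$ and for $i=1,2,3$ $$\lambda_i(u_1,u_2,u_3)=u_1+u_2+u_3+2\nu-\frac{I}{\partial I/\partial u_i}.$$ These $\lambda_i$ are the characteristic speeds of the single phase Whitham equations for the Camassa–Holm equation. *)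

theory Defs
  imports "HOL-Analysis.Analysis"
begin

text \<open>The integral I(u1,u2,u3) (convergent improper integral, taken as a
  Henstock-Kurzweil integral over the closed interval; endpoints are a null set).\<close>
definition Iint :: "real \<Rightarrow> real \<Rightarrow> real \<Rightarrow> real \<Rightarrow> real" where
  "Iint \<nu> u1 u2 u3 = integral {u3..u2}
     (\<lambda>\<eta>. (\<eta> + \<nu>) / sqrt ((\<eta> + \<nu>) * (u1 - \<eta>) * (u2 - \<eta>) * (\<eta> - u3)))"

definition Ivec :: "real \<Rightarrow> (nat \<Rightarrow> real) \<Rightarrow> real" where
  "Ivec \<nu> u = Iint \<nu> (u 1) (u 2) (u 3)"

definition pderiv_at :: "((nat \<Rightarrow> real) \<Rightarrow> real) \<Rightarrow> (nat \<Rightarrow> real) \<Rightarrow> nat \<Rightarrow> real" where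
  "pderiv_at F u i = deriv (\<lambda>t. F (u(i := t))) (u i)"

definition lam :: "real \<Rightarrow> (nat \<Rightarrow> real) \<Rightarrow> nat \<Rightarrow> real" where
  "lam \<nu> u i = u 1 + u 2 + u 3 + 2 * \<nu> - Ivec \<nu> u / pderiv_at (Ivec \<nu>) u i"

end

theory Submission
  imports Defs
begin

definition mm :: "real \<Rightarrow> real \<Rightarrow> real \<Rightarrow> real \<Rightarrow> real \<Rightarrow> real" where
  "mm \<nu> a b x e = (e+\<nu>) powr a * (x-e) powr b"

lemma d_mm_x: assumes "e+\<nu>>0" "x-e>0"
  shows "((\<lambda>x. mm \<nu> a b x e) has_real_derivative b * mm \<nu> a (b-1) x e) (at x)"
  unfolding mm_def using assms
  by (auto intro!: derivative_eq_intros simp: powr_diff mult_ac)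

lemma d_mm_e: assumes "e+\<nu>>0" "x-e>0"
  shows "((\<lambda>e. mm \<nu> a b x e) has_real_derivative a * mm \<nu> (a-1) b x e - b * mm \<nu> a (b-1) x e) (at e)"
  unfolding mm_def using assms
  by (auto intro!: derivative_eq_intros simp: powr_diff mult_ac)


definition "gg \<nu> x e = mm \<nu> (1/2) (-1/2) x e"
definition "gx \<nu> x e = -1/2 * mm \<nu> (1/2) (-3/2) x e"
definition "ge \<nu> x e = 1/2 * mm \<nu> (-1/2) (-1/2) x e + 1/2 * mm \<nu> (1/2) (-3/2) x e"
definition "gxe \<nu> x e = -1/4 * mm \<nu> (-1/2) (-3/2) x e - 3/4 * mm \<nu> (1/2) (-5/2) x e"
definition "gee \<nu> x e = -1/4 * mm \<nu> (-3/2) (-1/2) x e + 1/2 * mm \<nu> (-1/2) (-3/2) x e + 3/4 * mm \<nu> (1/2) (-5/2) x e"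

lemma d_gg_x: assumes "e+\<nu>>0" "x-e>0"
  shows "((\<lambda>x. gg \<nu> x e) has_real_derivative gx \<nu> x e) (at x)"
  unfolding gg_def gx_def
  by (rule DERIV_cong[OF d_mm_x[OF assms]]) simp

lemma d_gg_e: assumes "e+\<nu>>0" "x-e>0"
  shows "((\<lambda>e. gg \<nu> x e) has_real_derivative ge \<nu> x e) (at e)"
  unfolding gg_def ge_def
  by (rule DERIV_cong[OF d_mm_e[OF assms]]) simp

lemma d_gx_e: assumes "e+\<nu>>0" "x-e>0"
  shows "((\<lambda>e. gx \<nu> x e) has_real_derivative gxe \<nu> x e) (at e)"
  unfolding gx_def gxe_def
  by (rule DERIV_cong[OF DERIV_cmult[OF d_mm_e[OF assms]]]) (simp add: algebra_simps)

lemma d_ge_x: assumes "e+\<nu>>0" "x-e>0"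
  shows "((\<lambda>x. ge \<nu> x e) has_real_derivative gxe \<nu> x e) (at x)"
  unfolding ge_def gxe_def
  by (rule DERIV_cong[OF DERIV_add[OF DERIV_cmult[OF d_mm_x[OF assms]] DERIV_cmult[OF d_mm_x[OF assms]]]])
     (simp add: algebra_simps)

lemma d_ge_e: assumes "e+\<nu>>0" "x-e>0"
  shows "((\<lambda>e. ge \<nu> x e) has_real_derivative gee \<nu> x e) (at e)"
  unfolding ge_def gee_def
  by (rule DERIV_cong[OF DERIV_add[OF DERIV_cmult[OF d_mm_e[OF assms]] DERIV_cmult[OF d_mm_e[OF assms]]]])
     (simp add: algebra_simps)

definition okr :: "real \<Rightarrow> (nat \<Rightarrow> real) \<Rightarrow> bool" where
  "okr \<nu> w \<longleftrightarrow> -\<nu> < w 3 \<and> w 3 < w 2 \<and> w 2 < w 1"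
definition eta :: "(nat \<Rightarrow> real) \<Rightarrow> real \<Rightarrow> real" where
  "eta w \<theta> = w 3 + (w 2 - w 3) * (sin \<theta>)^2"
definition FF :: "real \<Rightarrow> (nat \<Rightarrow> real) \<Rightarrow> real \<Rightarrow> real" where "FF \<nu> w \<theta> = 2 * gg \<nu> (w 1) (eta w \<theta>)"
definition dF :: "real \<Rightarrow> (nat \<Rightarrow> real) \<Rightarrow> nat \<Rightarrow> real \<Rightarrow> real" where "dF \<nu> w k \<theta> = (if k = 1 then 2 * gx \<nu> (w 1) (eta w \<theta>)
   else if k = 2 then 2 * ge \<nu> (w 1) (eta w \<theta>) * (sin \<theta>)^2
   else 2 * ge \<nu> (w 1) (eta w \<theta>) * (1 - (sin \<theta>)^2))"
definition ddF :: "real \<Rightarrow> (nat \<Rightarrow> real) \<Rightarrow> nat \<Rightarrow> nat \<Rightarrow> real \<Rightarrow> real" where "ddF \<nu> w i j \<theta> = (if (i = 1 \<and> j = 2) \<or> (i = 2 \<and> j = 1) then 2 * gxe \<nu> (w 1) (eta w \<theta>) * (sin \<theta>)^2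
   else if (i = 1 \<and> j = 3) \<or> (i = 3 \<and> j = 1) then 2 * gxe \<nu> (w 1) (eta w \<theta>) * (1 - (sin \<theta>)^2)
   else 2 * gee \<nu> (w 1) (eta w \<theta>) * (sin \<theta>)^2 * (1 - (sin \<theta>)^2))"

lemma eta_bounds: assumes "okr \<nu> w" shows "w 3 \<le> eta w \<theta>" "eta w \<theta> \<le> w 2"
proof -
  have s: "0 \<le> (sin \<theta>)^2" "(sin \<theta>)^2 \<le> 1" by (auto simp: abs_square_le_1)
  have d: "w 2 - w 3 > 0" using assms by (simp add: okr_def)
  have "0 \<le> (w 2 - w 3) * (sin \<theta>)^2" using s d by simp
  then show "w 3 \<le> eta w \<theta>" by (simp add: eta_def)
  have "(w 2 - w 3) * (sin \<theta>)^2 \<le> (w 2 - w 3)" using s d by (simp add: mult_left_le)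
  then show "eta w \<theta> \<le> w 2" by (simp add: eta_def)
qed

lemma eta_pos: assumes "okr \<nu> w" shows "eta w \<theta> + \<nu> > 0" "w 1 - eta w \<theta> > 0"
  using eta_bounds[OF assms, of \<theta>] assms by (auto simp: okr_def)

lemma ok_ball: assumes "okr \<nu> w" "k \<in> {1,2,3::nat}"
  shows "\<exists>\<delta>>0. \<forall>t. \<bar>t - w k\<bar> < \<delta> \<longrightarrow> okr \<nu> (w(k:=t))"
proof -
  define \<delta> where "\<delta> = min (w 3 + \<nu>) (min (w 2 - w 3) (w 1 - w 2))"
  have "\<delta> > 0" using assms by (auto simp: okr_def \<delta>_def)
  moreover have "\<forall>t. \<bar>t - w k\<bar> < \<delta> \<longrightarrow> okr \<nu> (w(k:=t))"
    using assms by (auto simp: okr_def \<delta>_def abs_less_iff)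
  ultimately show ?thesis by blast
qed

lemma PD1:
  assumes ok: "okr \<nu> w" and k: "k \<in> {1,2,3::nat}"
  shows "((\<lambda>s. FF \<nu> (w(k:=s)) \<theta>) has_real_derivative dF \<nu> w k \<theta>) (at (w k))"
proof -
  note e1 = eta_pos[OF ok, of \<theta>]
  consider "k=1" | "k=2" | "k=3" using k by auto
  then show ?thesis
  proof cases
    case 1
    have "((\<lambda>s. 2 * gg \<nu> s (eta w \<theta>)) has_real_derivative 2 * gx \<nu> (w 1) (eta w \<theta>)) (at (w 1))"
      by (intro DERIV_cmult d_gg_x e1)
    then show ?thesis using 1 by (simp add: FF_def dF_def eta_def)
  next
    case 2
    have h: "((\<lambda>s. w 3 + (s - w 3) * sin \<theta>^2) has_real_derivative sin \<theta>^2) (at (w 2))"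
      by (auto intro!: derivative_eq_intros)
    have "((\<lambda>s. 2 * gg \<nu> (w 1) (w 3 + (s - w 3) * sin \<theta>^2)) has_real_derivative 2 * (ge \<nu> (w 1) (eta w \<theta>) * sin \<theta>^2)) (at (w 2))"
      apply (intro DERIV_cmult)
      apply (rule DERIV_chain2[OF _ h])
      using d_gg_e[OF e1] by (simp add: eta_def)
    then show ?thesis using 2 by (simp add: FF_def dF_def eta_def mult_ac)
  next
    case 3
    have h: "((\<lambda>s. s + (w 2 - s) * sin \<theta>^2) has_real_derivative 1 - sin \<theta>^2) (at (w 3))"
      by (auto intro!: derivative_eq_intros)
    have "((\<lambda>s. 2 * gg \<nu> (w 1) (s + (w 2 - s) * sin \<theta>^2)) has_real_derivative 2 * (ge \<nu> (w 1) (eta w \<theta>) * (1 - sin \<theta>^2))) (at (w 3))"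
      apply (intro DERIV_cmult)
      apply (rule DERIV_chain2[OF _ h])
      using d_gg_e[OF e1] by (simp add: eta_def)
    then show ?thesis using 3 by (simp add: FF_def dF_def eta_def mult_ac)
  qed
qed


lemma ch2: assumes ok: "okr \<nu> w"
  and G: "\<And>e. e+\<nu>>0 \<Longrightarrow> w 1 - e > 0 \<Longrightarrow> ((\<lambda>e. G e) has_real_derivative G' e) (at e)"
  shows "((\<lambda>s. G (w 3 + (s - w 3) * sin \<theta>^2)) has_real_derivative G' (eta w \<theta>) * sin \<theta>^2) (at (w 2))"
proof -
  have h: "((\<lambda>s. w 3 + (s - w 3) * sin \<theta>^2) has_real_derivative sin \<theta>^2) (at (w 2))"
    by (auto intro!: derivative_eq_intros)
  show ?thesis
    apply (rule DERIV_chain2[OF _ h])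
    using G[OF eta_pos[OF ok, of \<theta>]] by (simp add: eta_def)
qed

lemma ch3: assumes ok: "okr \<nu> w"
  and G: "\<And>e. e+\<nu>>0 \<Longrightarrow> w 1 - e > 0 \<Longrightarrow> ((\<lambda>e. G e) has_real_derivative G' e) (at e)"
  shows "((\<lambda>s. G (s + (w 2 - s) * sin \<theta>^2)) has_real_derivative G' (eta w \<theta>) * (1 - sin \<theta>^2)) (at (w 3))"
proof -
  have h: "((\<lambda>s. s + (w 2 - s) * sin \<theta>^2) has_real_derivative 1 - sin \<theta>^2) (at (w 3))"
    by (auto intro!: derivative_eq_intros)
  show ?thesis
    apply (rule DERIV_chain2[OF _ h])
    using G[OF eta_pos[OF ok, of \<theta>]] by (simp add: eta_def)
qed

lemma PD2:
  assumes ok: "okr \<nu> w" and i: "i \<in> {1,2,3::nat}" and j: "j \<in> {1,2,3::nat}" and ij: "i \<noteq> j"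
  shows "((\<lambda>s. dF \<nu> (w(j:=s)) i \<theta>) has_real_derivative ddF \<nu> w i j \<theta>) (at (w j))"
proof -
  note e1 = eta_pos[OF ok, of \<theta>]
  consider "i=1" "j=2" | "i=1" "j=3" | "i=2" "j=1" | "i=2" "j=3" | "i=3" "j=1" | "i=3" "j=2"
    using i j ij by auto
  then show ?thesis
  proof cases
    case 1
    have "((\<lambda>s. 2 * gx \<nu> (w 1) (w 3 + (s - w 3) * sin \<theta>^2)) has_real_derivative 2 * (gxe \<nu> (w 1) (eta w \<theta>) * sin \<theta>^2)) (at (w 2))"
      by (intro DERIV_cmult ch2[OF ok] d_gx_e)
    then show ?thesis using 1 by (simp add: dF_def ddF_def eta_def mult_ac)
  next
    case 2
    have "((\<lambda>s. 2 * gx \<nu> (w 1) (s + (w 2 - s) * sin \<theta>^2)) has_real_derivative 2 * (gxe \<nu> (w 1) (eta w \<theta>) * (1 - sin \<theta>^2))) (at (w 3))"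
      by (intro DERIV_cmult ch3[OF ok] d_gx_e)
    then show ?thesis using 2 by (simp add: dF_def ddF_def eta_def mult_ac)
  next
    case 3
    have "((\<lambda>s. 2 * ge \<nu> s (eta w \<theta>) * sin \<theta>^2) has_real_derivative 2 * gxe \<nu> (w 1) (eta w \<theta>) * sin \<theta>^2) (at (w 1))"
      by (intro DERIV_cmult DERIV_cmult_right d_ge_x e1)
    then show ?thesis using 3 by (simp add: dF_def ddF_def eta_def mult_ac)
  next
    case 4
    have "((\<lambda>s. 2 * ge \<nu> (w 1) (s + (w 2 - s) * sin \<theta>^2) * sin \<theta>^2) has_real_derivative 2 * (gee \<nu> (w 1) (eta w \<theta>) * (1 - sin \<theta>^2)) * sin \<theta>^2) (at (w 3))"
      by (intro DERIV_cmult DERIV_cmult_right ch3[OF ok] d_ge_e)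
    then show ?thesis using 4 by (simp add: dF_def ddF_def eta_def mult_ac)
  next
    case 5
    have "((\<lambda>s. 2 * ge \<nu> s (eta w \<theta>) * (1 - sin \<theta>^2)) has_real_derivative 2 * gxe \<nu> (w 1) (eta w \<theta>) * (1 - sin \<theta>^2)) (at (w 1))"
      by (intro DERIV_cmult DERIV_cmult_right d_ge_x e1)
    then show ?thesis using 5 by (simp add: dF_def ddF_def eta_def mult_ac)
  next
    case 6
    have "((\<lambda>s. 2 * ge \<nu> (w 1) (w 3 + (s - w 3) * sin \<theta>^2) * (1 - sin \<theta>^2)) has_real_derivative 2 * (gee \<nu> (w 1) (eta w \<theta>) * sin \<theta>^2) * (1 - sin \<theta>^2)) (at (w 2))"
      by (intro DERIV_cmult DERIV_cmult_right ch2[OF ok] d_ge_e)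
    then show ?thesis using 6 by (simp add: dF_def ddF_def eta_def mult_ac)
  qed
qed

lemma cont_mm: assumes "continuous_on S X" "continuous_on S E" "\<forall>p\<in>S. E p + \<nu> > 0 \<and> X p - E p > 0"
  shows "continuous_on S (\<lambda>p. mm \<nu> a b (X p) (E p))"
  unfolding mm_def using assms
  by (intro continuous_intros) auto

lemma LB:
  fixes f f' :: "real \<Rightarrow> real \<Rightarrow> real"
  assumes \<delta>: "0<\<delta>"
  and d: "\<And>t \<theta>. \<bar>t - t0\<bar> < \<delta> \<Longrightarrow> \<theta> \<in> {0..pi/2} \<Longrightarrow> ((\<lambda>s. f s \<theta>) has_real_derivative f' t \<theta>) (at t)"
  and c: "\<And>t. \<bar>t-t0\<bar><\<delta> \<Longrightarrow> continuous_on {0..pi/2} (f t)"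
  and c': "continuous_on (ball t0 \<delta> \<times> {0..pi/2}) (\<lambda>p. f' (fst p) (snd p))"
  shows "((\<lambda>t. integral {0..pi/2} (f t)) has_real_derivative integral {0..pi/2} (f' t0)) (at t0)"
proof -
  have cb: "cbox 0 (pi/2) = {0..pi/2::real}" by simp
  have e: "(\<lambda>(x, t). f' x t) = (\<lambda>p. f' (fst p) (snd p))" by auto
  have b: "x \<in> ball t0 \<delta> \<Longrightarrow> \<bar>x - t0\<bar> < \<delta>" for x by (simp add: dist_real_def abs_minus_commute)
  have "((\<lambda>t. integral (cbox 0 (pi/2)) (f t)) has_field_derivative integral (cbox 0 (pi/2)) (f' t0)) (at t0 within ball t0 \<delta>)"
  proof (rule leibniz_rule_field_derivative)
    fix x t assume x: "x \<in> ball t0 \<delta>" and t: "t \<in> cbox 0 (pi/2)"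
    have "((\<lambda>s. f s t) has_real_derivative f' x t) (at x)"
      using d[OF b[OF x]] t cb by blast
    then show "((\<lambda>x. f x t) has_field_derivative f' x t) (at x within ball t0 \<delta>)"
      by (rule has_field_derivative_at_within)
  next
    fix x assume x: "x \<in> ball t0 \<delta>"
    show "f x integrable_on cbox 0 (pi/2)"
      unfolding cb by (rule integrable_continuous_real[OF c[OF b[OF x]]])
  next
    show "continuous_on (ball t0 \<delta> \<times> cbox 0 (pi/2)) (\<lambda>(x, t). f' x t)"
      unfolding cb e by (rule c')
  next
    show "t0 \<in> ball t0 \<delta>" using \<delta> by simp
  next
    show "convex (ball t0 \<delta>)" by (rule convex_ball)
  qed
  moreover have "at t0 within ball t0 \<delta> = at t0"
    by (rule at_within_open) (use \<delta> in auto)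
  ultimately show ?thesis unfolding cb by simp
qed

lemma cont_gg: "continuous_on S X \<Longrightarrow> continuous_on S E \<Longrightarrow> (\<And>p. p\<in>S \<Longrightarrow> E p + \<nu> > 0 \<and> X p - E p > 0)
  \<Longrightarrow> continuous_on S (\<lambda>p. gg \<nu> (X p) (E p))"
  unfolding gg_def by (intro cont_mm) auto
lemma cont_gx: "continuous_on S X \<Longrightarrow> continuous_on S E \<Longrightarrow> (\<And>p. p\<in>S \<Longrightarrow> E p + \<nu> > 0 \<and> X p - E p > 0)
  \<Longrightarrow> continuous_on S (\<lambda>p. gx \<nu> (X p) (E p))"
  unfolding gx_def by (intro cont_mm continuous_intros) auto
lemma cont_ge: "continuous_on S X \<Longrightarrow> continuous_on S E \<Longrightarrow> (\<And>p. p\<in>S \<Longrightarrow> E p + \<nu> > 0 \<and> X p - E p > 0)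
  \<Longrightarrow> continuous_on S (\<lambda>p. ge \<nu> (X p) (E p))"
  unfolding ge_def by (intro cont_mm continuous_intros) auto
lemma cont_gxe: "continuous_on S X \<Longrightarrow> continuous_on S E \<Longrightarrow> (\<And>p. p\<in>S \<Longrightarrow> E p + \<nu> > 0 \<and> X p - E p > 0)
  \<Longrightarrow> continuous_on S (\<lambda>p. gxe \<nu> (X p) (E p))"
  unfolding gxe_def by (intro cont_mm continuous_intros) auto
lemma cont_gee: "continuous_on S X \<Longrightarrow> continuous_on S E \<Longrightarrow> (\<And>p. p\<in>S \<Longrightarrow> E p + \<nu> > 0 \<and> X p - E p > 0)
  \<Longrightarrow> continuous_on S (\<lambda>p. gee \<nu> (X p) (E p))"
  unfolding gee_def by (intro cont_mm continuous_intros) auto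

lemma cont_eta_upd: "k \<in> {1,2,3::nat} \<Longrightarrow> continuous_on S (\<lambda>p. eta (w(k:=fst p)) (snd p))"
  by (auto simp: eta_def intro!: continuous_intros)
lemma cont_w1_upd: "continuous_on S (\<lambda>p. (w(k:=fst p)) 1)"
  by (cases "k=1") (auto intro!: continuous_intros)

lemma cont_if_const: "continuous_on S f \<Longrightarrow> continuous_on S g \<Longrightarrow> continuous_on S (\<lambda>p. if P then f p else g p)"
  by (cases P) auto

lemma cont_dF:
  assumes "\<And>p. p\<in>S \<Longrightarrow> okr \<nu> (w(k:=fst p))" "k \<in> {1,2,3}"
  shows "continuous_on S (\<lambda>p. dF \<nu> (w(k:=fst p)) i (snd p))"
proof -
  have pos: "\<And>p. p\<in>S \<Longrightarrow> eta (w(k:=fst p)) (snd p) + \<nu> > 0 \<and> (w(k:=fst p)) 1 - eta (w(k:=fst p)) (snd p) > 0"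
    using eta_pos assms(1) by blast
  note cg = cont_w1_upd cont_eta_upd[OF assms(2)] pos
  have cs: "continuous_on S (\<lambda>p. (sin (snd p))^2)" "continuous_on S (\<lambda>p. 1 - (sin (snd p))^2)"
    by (intro continuous_intros)+
  have c1: "continuous_on S (\<lambda>p. 2 * gx \<nu> ((w(k:=fst p)) 1) (eta (w(k:=fst p)) (snd p)))"
    by (intro continuous_on_mult continuous_on_const cont_gx[OF cg] cs)
  have c2: "continuous_on S (\<lambda>p. 2 * ge \<nu> ((w(k:=fst p)) 1) (eta (w(k:=fst p)) (snd p)) * (sin (snd p))^2)"
    by (intro continuous_on_mult continuous_on_const cont_ge[OF cg] cs)
  have c3: "continuous_on S (\<lambda>p. 2 * ge \<nu> ((w(k:=fst p)) 1) (eta (w(k:=fst p)) (snd p)) * (1 - (sin (snd p))^2))"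
    by (intro continuous_on_mult continuous_on_const cont_ge[OF cg] cs)
  show ?thesis unfolding dF_def
    by (intro cont_if_const c1 c2 c3)
qed

lemma cont_ddF:
  assumes "\<And>p. p\<in>S \<Longrightarrow> okr \<nu> (w(k:=fst p))" "k \<in> {1,2,3}"
  shows "continuous_on S (\<lambda>p. ddF \<nu> (w(k:=fst p)) i j (snd p))"
proof -
  have pos: "\<And>p. p\<in>S \<Longrightarrow> eta (w(k:=fst p)) (snd p) + \<nu> > 0 \<and> (w(k:=fst p)) 1 - eta (w(k:=fst p)) (snd p) > 0"
    using eta_pos assms(1) by blast
  note cg = cont_w1_upd cont_eta_upd[OF assms(2)] pos
  have cs: "continuous_on S (\<lambda>p. (sin (snd p))^2)" "continuous_on S (\<lambda>p. 1 - (sin (snd p))^2)"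
    by (intro continuous_intros)+
  have c1: "continuous_on S (\<lambda>p. 2 * gxe \<nu> ((w(k:=fst p)) 1) (eta (w(k:=fst p)) (snd p)) * (sin (snd p))^2)"
    by (intro continuous_on_mult continuous_on_const cont_gxe[OF cg] cs)
  have c2: "continuous_on S (\<lambda>p. 2 * gxe \<nu> ((w(k:=fst p)) 1) (eta (w(k:=fst p)) (snd p)) * (1 - (sin (snd p))^2))"
    by (intro continuous_on_mult continuous_on_const cont_gxe[OF cg] cs)
  have c3: "continuous_on S (\<lambda>p. 2 * gee \<nu> ((w(k:=fst p)) 1) (eta (w(k:=fst p)) (snd p)) * (sin (snd p))^2 * (1 - (sin (snd p))^2))"
    by (intro continuous_on_mult continuous_on_const cont_gee[OF cg] cs)
  show ?thesis unfolding ddF_def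
    by (intro cont_if_const c1 c2 c3)
qed

lemma cont_FF: assumes "okr \<nu> w" shows "continuous_on S (FF \<nu> w)"
proof -
  have "continuous_on S (\<lambda>\<theta>. 2 * gg \<nu> (w 1) (eta w \<theta>))"
    using eta_pos[OF assms] by (intro continuous_intros cont_gg) (auto simp: eta_def intro!: continuous_intros)
  then show ?thesis by (simp add: FF_def[abs_def])
qed

lemma cont_dF1: assumes "okr \<nu> w" shows "continuous_on S (dF \<nu> w i)"
proof -
  have "continuous_on S (\<lambda>\<theta>. dF \<nu> w i \<theta>)" unfolding dF_def
    using eta_pos[OF assms]
    by (cases "i=1"; cases "i=2") (auto simp: eta_def intro!: continuous_intros cont_gx cont_ge)
  then show ?thesis by simp
qed

lemma cont_ddF1: assumes "okr \<nu> w" shows "continuous_on S (ddF \<nu> w i j)"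
proof -
  have pos: "\<And>\<theta>. \<theta>\<in>S \<Longrightarrow> eta w \<theta> + \<nu> > 0 \<and> w 1 - eta w \<theta> > 0" using eta_pos[OF assms] by blast
  have ce: "continuous_on S (\<lambda>\<theta>. eta w \<theta>)" unfolding eta_def by (intro continuous_intros)
  note cg = continuous_on_const ce pos
  have cs: "continuous_on S (\<lambda>p. (sin p)^2)" "continuous_on S (\<lambda>p. 1 - (sin p)^2)"
    by (intro continuous_intros)+
  have c1: "continuous_on S (\<lambda>p. 2 * gxe \<nu> (w 1) (eta w p) * (sin p)^2)"
    by (intro continuous_on_mult continuous_on_const cont_gxe[OF cg] cs)
  have c2: "continuous_on S (\<lambda>p. 2 * gxe \<nu> (w 1) (eta w p) * (1 - (sin p)^2))"
    by (intro continuous_on_mult continuous_on_const cont_gxe[OF cg] cs)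
  have c3: "continuous_on S (\<lambda>p. 2 * gee \<nu> (w 1) (eta w p) * (sin p)^2 * (1 - (sin p)^2))"
    by (intro continuous_on_mult continuous_on_const cont_gee[OF cg] cs)
  have "continuous_on S (\<lambda>\<theta>. ddF \<nu> w i j \<theta>)" unfolding ddF_def
    by (intro cont_if_const c1 c2 c3)
  then show ?thesis by simp
qed

definition JJ :: "real \<Rightarrow> (nat \<Rightarrow> real) \<Rightarrow> real" where "JJ \<nu> w = integral {0..pi/2} (FF \<nu> w)"
definition Ji :: "real \<Rightarrow> (nat \<Rightarrow> real) \<Rightarrow> nat \<Rightarrow> real" where "Ji \<nu> w k = integral {0..pi/2} (dF \<nu> w k)"

lemma DJ: assumes ok: "okr \<nu> w" and k: "k \<in> {1,2,3::nat}"
  shows "((\<lambda>t. JJ \<nu> (w(k:=t))) has_real_derivative Ji \<nu> w k) (at (w k))"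
proof -
  obtain \<delta> where \<delta>: "\<delta> > 0" and h\<delta>: "\<And>t. \<bar>t - w k\<bar> < \<delta> \<Longrightarrow> okr \<nu> (w(k:=t))"
    using ok_ball[OF ok k] by blast
  have "((\<lambda>t. integral {0..pi/2} (FF \<nu> (w(k:=t)))) has_real_derivative integral {0..pi/2} (dF \<nu> (w(k:=w k)) k)) (at (w k))"
  proof (rule LB[where f="\<lambda>t \<theta>. FF \<nu> (w(k:=t)) \<theta>" and f'="\<lambda>t \<theta>. dF \<nu> (w(k:=t)) k \<theta>", OF \<delta>])
    fix t \<theta> assume t: "\<bar>t - w k\<bar> < \<delta>"
    from PD1[OF h\<delta>[OF t] k, of \<theta>]
    show "((\<lambda>s. FF \<nu> (w(k:=s)) \<theta>) has_real_derivative dF \<nu> (w(k:=t)) k \<theta>) (at t)" by simp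
  next
    fix t assume t: "\<bar>t - w k\<bar> < \<delta>"
    show "continuous_on {0..pi/2} (\<lambda>\<theta>. FF \<nu> (w(k:=t)) \<theta>)"
      using cont_FF[OF h\<delta>[OF t]] by simp
  next
    show "continuous_on (ball (w k) \<delta> \<times> {0..pi/2}) (\<lambda>p. dF \<nu> (w(k:=fst p)) k (snd p))"
      by (rule cont_dF[OF _ k]) (auto intro!: h\<delta> simp: dist_real_def abs_minus_commute)
  qed
  then show ?thesis by (simp add: JJ_def Ji_def)
qed

lemma DJi: assumes ok: "okr \<nu> w" and i: "i \<in> {1,2,3::nat}" and j: "j \<in> {1,2,3::nat}" and ij: "i \<noteq> j"
  shows "((\<lambda>t. Ji \<nu> (w(j:=t)) i) has_real_derivative integral {0..pi/2} (ddF \<nu> w i j)) (at (w j))"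
proof -
  obtain \<delta> where \<delta>: "\<delta> > 0" and h\<delta>: "\<And>t. \<bar>t - w j\<bar> < \<delta> \<Longrightarrow> okr \<nu> (w(j:=t))"
    using ok_ball[OF ok j] by blast
  have "((\<lambda>t. integral {0..pi/2} (dF \<nu> (w(j:=t)) i)) has_real_derivative integral {0..pi/2} (ddF \<nu> (w(j:=w j)) i j)) (at (w j))"
  proof (rule LB[where f="\<lambda>t \<theta>. dF \<nu> (w(j:=t)) i \<theta>" and f'="\<lambda>t \<theta>. ddF \<nu> (w(j:=t)) i j \<theta>", OF \<delta>])
    fix t \<theta> assume t: "\<bar>t - w j\<bar> < \<delta>"
    from PD2[OF h\<delta>[OF t] i j ij, of \<theta>]
    show "((\<lambda>s. dF \<nu> (w(j:=s)) i \<theta>) has_real_derivative ddF \<nu> (w(j:=t)) i j \<theta>) (at t)" by simp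
  next
    fix t assume t: "\<bar>t - w j\<bar> < \<delta>"
    show "continuous_on {0..pi/2} (\<lambda>\<theta>. dF \<nu> (w(j:=t)) i \<theta>)"
      using cont_dF1[OF h\<delta>[OF t]] by simp
  next
    show "continuous_on (ball (w j) \<delta> \<times> {0..pi/2}) (\<lambda>p. ddF \<nu> (w(j:=fst p)) i j (snd p))"
      by (rule cont_ddF[OF _ j]) (auto intro!: h\<delta> simp: dist_real_def abs_minus_commute)
  qed
  then show ?thesis by (simp add: Ji_def)
qed

lemma mm_rel: assumes "x - e > 0" shows "mm \<nu> a (b+1) x e = (x-e) * mm \<nu> a b x e"
  using assms by (simp add: mm_def powr_add mult_ac)

lemma deta: "((\<lambda>\<theta>. eta w \<theta>) has_real_derivative (w 2 - w 3) * (2 * sin \<theta> * cos \<theta>)) (at \<theta>)"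
  unfolding eta_def by (auto intro!: derivative_eq_intros)

lemma dF1: "dF \<nu> w 1 \<theta> = 2 * gx \<nu> (w 1) (eta w \<theta>)" by (simp add: dF_def)
lemma dF2: "dF \<nu> w 2 \<theta> = 2 * ge \<nu> (w 1) (eta w \<theta>) * (sin \<theta>)^2" by (simp add: dF_def)
lemma dF3: "dF \<nu> w 3 \<theta> = 2 * ge \<nu> (w 1) (eta w \<theta>) * (1 - (sin \<theta>)^2)" by (simp add: dF_def)
lemma ddF12: "ddF \<nu> w 1 2 \<theta> = 2 * gxe \<nu> (w 1) (eta w \<theta>) * (sin \<theta>)^2" by (simp add: ddF_def)
lemma ddF13: "ddF \<nu> w 1 3 \<theta> = 2 * gxe \<nu> (w 1) (eta w \<theta>) * (1 - (sin \<theta>)^2)" by (simp add: ddF_def)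
lemma ddF23: "ddF \<nu> w 2 3 \<theta> = 2 * gee \<nu> (w 1) (eta w \<theta>) * (sin \<theta>)^2 * (1 - (sin \<theta>)^2)" by (simp add: ddF_def)

lemma pw12: assumes ok: "okr \<nu> w"
  shows "((\<lambda>\<theta>. -2 * (sin \<theta> * cos \<theta> * gx \<nu> (w 1) (eta w \<theta>))) has_real_derivative
     2 * (w 1 - w 2) * ddF \<nu> w 1 2 \<theta> - (dF \<nu> w 1 \<theta> - dF \<nu> w 2 \<theta>)) (at \<theta>)"
proof -
  note e1 = eta_pos[OF ok, of \<theta>]
  have dg: "((\<lambda>\<theta>. gx \<nu> (w 1) (eta w \<theta>)) has_real_derivative gxe \<nu> (w 1) (eta w \<theta>) * ((w 2 - w 3) * (2 * sin \<theta> * cos \<theta>))) (at \<theta>)"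
    by (rule DERIV_chain2[OF d_gx_e[OF e1] deta])
  have dsc: "((\<lambda>\<theta>. sin \<theta> * cos \<theta>) has_real_derivative cos \<theta> * cos \<theta> - sin \<theta> * sin \<theta>) (at \<theta>)"
    by (auto intro!: derivative_eq_intros)
  have d: "((\<lambda>\<theta>. -2 * (sin \<theta> * cos \<theta> * gx \<nu> (w 1) (eta w \<theta>))) has_real_derivative
     -2 * ((cos \<theta> * cos \<theta> - sin \<theta> * sin \<theta>) * gx \<nu> (w 1) (eta w \<theta>) + sin \<theta> * cos \<theta> * (gxe \<nu> (w 1) (eta w \<theta>) * ((w 2 - w 3) * (2 * sin \<theta> * cos \<theta>))))) (at \<theta>)"
    by (rule DERIV_cmult, rule DERIV_cong[OF DERIV_mult[OF dsc dg]]) (auto simp: algebra_simps)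
  have r1: "mm \<nu> (-1/2) (-1/2) (w 1) (eta w \<theta>) = (w 1 - eta w \<theta>) * mm \<nu> (-1/2) (-3/2) (w 1) (eta w \<theta>)"
    using mm_rel[OF e1(2), of \<nu> "-1/2" "-3/2"] by (simp add: numeral_eq_Suc)
  have r2: "mm \<nu> (1/2) (-3/2) (w 1) (eta w \<theta>) = (w 1 - eta w \<theta>) * mm \<nu> (1/2) (-5/2) (w 1) (eta w \<theta>)"
    using mm_rel[OF e1(2), of \<nu> "1/2" "-5/2"] by simp
  have et: "eta w \<theta> = w 3 + (w 2 - w 3) * (sin \<theta>)^2" by (simp add: eta_def)
  have sc: "(sin \<theta>)^2 + (cos \<theta>)^2 = 1" by simp
  show ?thesis
    apply (rule DERIV_cong[OF d])
    unfolding dF1 dF2 ddF12 gx_def ge_def gxe_def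
    using r1 r2 et sc by algebra
qed

lemma pw13: assumes ok: "okr \<nu> w"
  shows "((\<lambda>\<theta>. 2 * (sin \<theta> * cos \<theta> * gx \<nu> (w 1) (eta w \<theta>))) has_real_derivative
     2 * (w 1 - w 3) * ddF \<nu> w 1 3 \<theta> - (dF \<nu> w 1 \<theta> - dF \<nu> w 3 \<theta>)) (at \<theta>)"
proof -
  note e1 = eta_pos[OF ok, of \<theta>]
  have dg: "((\<lambda>\<theta>. gx \<nu> (w 1) (eta w \<theta>)) has_real_derivative gxe \<nu> (w 1) (eta w \<theta>) * ((w 2 - w 3) * (2 * sin \<theta> * cos \<theta>))) (at \<theta>)"
    by (rule DERIV_chain2[OF d_gx_e[OF e1] deta])
  have dsc: "((\<lambda>\<theta>. sin \<theta> * cos \<theta>) has_real_derivative cos \<theta> * cos \<theta> - sin \<theta> * sin \<theta>) (at \<theta>)"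
    by (auto intro!: derivative_eq_intros)
  have d: "((\<lambda>\<theta>. 2 * (sin \<theta> * cos \<theta> * gx \<nu> (w 1) (eta w \<theta>))) has_real_derivative
     2 * ((cos \<theta> * cos \<theta> - sin \<theta> * sin \<theta>) * gx \<nu> (w 1) (eta w \<theta>) + sin \<theta> * cos \<theta> * (gxe \<nu> (w 1) (eta w \<theta>) * ((w 2 - w 3) * (2 * sin \<theta> * cos \<theta>))))) (at \<theta>)"
    by (rule DERIV_cmult, rule DERIV_cong[OF DERIV_mult[OF dsc dg]]) (auto simp: algebra_simps)
  have r1: "mm \<nu> (-1/2) (-1/2) (w 1) (eta w \<theta>) = (w 1 - eta w \<theta>) * mm \<nu> (-1/2) (-3/2) (w 1) (eta w \<theta>)"
    using mm_rel[OF e1(2), of \<nu> "-1/2" "-3/2"] by (simp add: numeral_eq_Suc)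
  have r2: "mm \<nu> (1/2) (-3/2) (w 1) (eta w \<theta>) = (w 1 - eta w \<theta>) * mm \<nu> (1/2) (-5/2) (w 1) (eta w \<theta>)"
    using mm_rel[OF e1(2), of \<nu> "1/2" "-5/2"] by simp
  have et: "eta w \<theta> = w 3 + (w 2 - w 3) * (sin \<theta>)^2" by (simp add: eta_def)
  have sc: "(sin \<theta>)^2 + (cos \<theta>)^2 = 1" by simp
  show ?thesis
    apply (rule DERIV_cong[OF d])
    unfolding dF1 dF3 ddF13 gx_def ge_def gxe_def
    using r1 r2 et sc by algebra
qed

lemma pw23: assumes ok: "okr \<nu> w"
  shows "((\<lambda>\<theta>. 2 * (sin \<theta> * cos \<theta> * ge \<nu> (w 1) (eta w \<theta>))) has_real_derivative
     2 * (w 2 - w 3) * ddF \<nu> w 2 3 \<theta> - (dF \<nu> w 2 \<theta> - dF \<nu> w 3 \<theta>)) (at \<theta>)"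
proof -
  note e1 = eta_pos[OF ok, of \<theta>]
  have dg: "((\<lambda>\<theta>. ge \<nu> (w 1) (eta w \<theta>)) has_real_derivative gee \<nu> (w 1) (eta w \<theta>) * ((w 2 - w 3) * (2 * sin \<theta> * cos \<theta>))) (at \<theta>)"
    by (rule DERIV_chain2[OF d_ge_e[OF e1] deta])
  have dsc: "((\<lambda>\<theta>. sin \<theta> * cos \<theta>) has_real_derivative cos \<theta> * cos \<theta> - sin \<theta> * sin \<theta>) (at \<theta>)"
    by (auto intro!: derivative_eq_intros)
  have d: "((\<lambda>\<theta>. 2 * (sin \<theta> * cos \<theta> * ge \<nu> (w 1) (eta w \<theta>))) has_real_derivative
     2 * ((cos \<theta> * cos \<theta> - sin \<theta> * sin \<theta>) * ge \<nu> (w 1) (eta w \<theta>) + sin \<theta> * cos \<theta> * (gee \<nu> (w 1) (eta w \<theta>) * ((w 2 - w 3) * (2 * sin \<theta> * cos \<theta>))))) (at \<theta>)"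
    by (rule DERIV_cmult, rule DERIV_cong[OF DERIV_mult[OF dsc dg]]) (auto simp: algebra_simps)
  have sc: "(sin \<theta>)^2 + (cos \<theta>)^2 = 1" by simp
  show ?thesis
    apply (rule DERIV_cong[OF d])
    unfolding dF2 dF3 ddF23
    using sc by algebra
qed

lemma epd_int:
  fixes \<Phi> A B D :: "real \<Rightarrow> real"
  assumes d: "\<And>\<theta>. (\<Phi> has_real_derivative (2*c*D \<theta> - (A \<theta> - B \<theta>))) (at \<theta>)"
    and e: "\<Phi> (pi/2) = \<Phi> 0"
    and cD: "continuous_on {0..pi/2} D" and cA: "continuous_on {0..pi/2} A" and cB: "continuous_on {0..pi/2} B"
  shows "2*c*integral {0..pi/2} D = integral {0..pi/2} A - integral {0..pi/2} B"
proof -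
  have "((\<lambda>\<theta>. 2*c*D \<theta> - (A \<theta> - B \<theta>)) has_integral \<Phi> (pi/2) - \<Phi> 0) {0..pi/2}"
  proof (rule fundamental_theorem_of_calculus)
    fix x assume "x \<in> {0..pi/2}"
    show "(\<Phi> has_vector_derivative (2*c*D x - (A x - B x))) (at x within {0..pi/2})"
      using d by (simp add: has_real_derivative_iff_has_vector_derivative[symmetric] has_field_derivative_at_within)
  qed simp
  then have "integral {0..pi/2} (\<lambda>\<theta>. 2*c*D \<theta> - (A \<theta> - B \<theta>)) = 0" using e by (simp add: integral_unique)
  moreover have "integral {0..pi/2} (\<lambda>\<theta>. 2*c*D \<theta> - (A \<theta> - B \<theta>)) = 2*c*integral {0..pi/2} D - (integral {0..pi/2} A - integral {0..pi/2} B)"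
  proof -
    have iD: "D integrable_on {0..pi/2}" and iA: "A integrable_on {0..pi/2}" and iB: "B integrable_on {0..pi/2}"
      using integrable_continuous_real cD cA cB by blast+
    have iD': "(\<lambda>\<theta>. 2*c*D \<theta>) integrable_on {0..pi/2}" using integrable_on_cmult_left[OF iD, of "2*c"] by simp
    have iAB: "(\<lambda>\<theta>. A \<theta> - B \<theta>) integrable_on {0..pi/2}" by (rule integrable_diff[OF iA iB])
    show ?thesis
      by (simp add: integral_diff[OF iD' iAB] integral_diff[OF iA iB])
  qed
  ultimately show ?thesis by simp
qed

lemma ddF_sym: "ddF \<nu> w i j \<theta> = ddF \<nu> w j i \<theta>"
  unfolding ddF_def by auto

lemma EPD:
  assumes ok: "okr \<nu> w" and i: "i \<in> {1,2,3::nat}" and j: "j \<in> {1,2,3::nat}" and ij: "i \<noteq> j"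
  shows "2*(w i - w j) * integral {0..pi/2} (ddF \<nu> w i j) = Ji \<nu> w i - Ji \<nu> w j"
proof -
  have c: "continuous_on {0..pi/2} (ddF \<nu> w a b)" "continuous_on {0..pi/2} (dF \<nu> w a)" for a b
    by (rule cont_ddF1[OF ok], rule cont_dF1[OF ok])
  have e12: "2*(w 1 - w 2) * integral {0..pi/2} (ddF \<nu> w 1 2) = Ji \<nu> w 1 - Ji \<nu> w 2"
    unfolding Ji_def by (rule epd_int[OF pw12[OF ok] _ c(1) c(2) c(2)]) simp
  have e13: "2*(w 1 - w 3) * integral {0..pi/2} (ddF \<nu> w 1 3) = Ji \<nu> w 1 - Ji \<nu> w 3"
    unfolding Ji_def by (rule epd_int[OF pw13[OF ok] _ c(1) c(2) c(2)]) simp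
  have e23: "2*(w 2 - w 3) * integral {0..pi/2} (ddF \<nu> w 2 3) = Ji \<nu> w 2 - Ji \<nu> w 3"
    unfolding Ji_def by (rule epd_int[OF pw23[OF ok] _ c(1) c(2) c(2)]) simp
  have s: "ddF \<nu> w j i = ddF \<nu> w i j" by (rule ext, rule ddF_sym)
  consider "i=1" "j=2" | "i=1" "j=3" | "i=2" "j=1" | "i=2" "j=3" | "i=3" "j=1" | "i=3" "j=2"
    using i j ij by auto
  then show ?thesis
  proof cases
    case 3 then show ?thesis using e12 s by (simp add: algebra_simps)
  next
    case 5 then show ?thesis using e13 s by (simp add: algebra_simps)
  next
    case 6 then show ?thesis using e23 s by (simp add: algebra_simps)
  qed (use e12 e13 e23 in simp_all)
qed

lemma pointwise_sub:
  assumes ok: "okr \<nu> w" and th: "0 < \<theta>" "\<theta> < pi/2"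
  shows "\<bar>(w 2 - w 3) * (2 * sin \<theta> * cos \<theta>)\<bar> *
     ((eta w \<theta> + \<nu>) / sqrt ((eta w \<theta> + \<nu>) * (w 1 - eta w \<theta>) * (w 2 - eta w \<theta>) * (eta w \<theta> - w 3)))
     = FF \<nu> w \<theta>"
proof -
  define e where "e = eta w \<theta>"
  define s where "s = sin \<theta>"
  define c where "c = cos \<theta>"
  have s0: "s > 0" unfolding s_def using th by (intro sin_gt_zero) auto
  have c0: "c > 0" unfolding c_def using th by (intro cos_gt_zero) auto
  have sc: "s^2 + c^2 = 1" unfolding s_def c_def by simp
  have d: "w 2 - w 3 > 0" using ok by (simp add: okr_def)
  have p: "e + \<nu> > 0" "w 1 - e > 0" unfolding e_def using eta_pos[OF ok] by auto
  have e1: "e - w 3 = (w 2 - w 3) * s^2" unfolding e_def eta_def s_def by simp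
  have e2: "w 2 - e = (w 2 - w 3) * c^2" using e1 sc by algebra
  have R: "(e + \<nu>) * (w 1 - e) * (w 2 - e) * (e - w 3) = (sqrt (e+\<nu>) * sqrt (w 1 - e) * ((w 2 - w 3) * s * c))^2"
  proof -
    have R1: "(sqrt (e+\<nu>) * sqrt (w 1 - e) * ((w 2 - w 3) * s * c))^2 = (e+\<nu>)*(w 1 - e)*((w 2 - w 3) * s * c)^2"
      using p by (simp add: power_mult_distrib)
    show ?thesis unfolding e1 e2 R1 by (simp add: power2_eq_square mult_ac)
  qed
  have sR: "sqrt ((e + \<nu>) * (w 1 - e) * (w 2 - e) * (e - w 3)) = sqrt (e+\<nu>) * sqrt (w 1 - e) * ((w 2 - w 3) * s * c)"
    unfolding R using p d s0 c0 by simp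
  have pos: "sqrt (e+\<nu>) > 0" "sqrt (w 1 - e) > 0" using p by auto
  have a: "\<bar>(w 2 - w 3) * (2 * s * c)\<bar> = (w 2 - w 3) * (2 * s * c)"
    using d s0 c0 by (intro abs_of_pos) simp
  have ee: "e+\<nu> = sqrt (e+\<nu>) * sqrt (e+\<nu>)" using p by simp
  have "\<bar>(w 2 - w 3) * (2 * s * c)\<bar> * ((e + \<nu>) / (sqrt (e+\<nu>) * sqrt (w 1 - e) * ((w 2 - w 3) * s * c)))
        = 2 * (sqrt (e+\<nu>) / sqrt (w 1 - e))"
  proof -
    have gen: "\<And>P Q K::real. P > 0 \<Longrightarrow> Q > 0 \<Longrightarrow> K > 0 \<Longrightarrow> (2*K) * ((P*P) / (P*Q*K)) = 2*(P/Q)"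
      by (simp add: field_simps)
    have K: "(w 2 - w 3) * s * c > 0" using d s0 c0 by simp
    have "(w 2 - w 3) * (2 * s * c) = 2 * ((w 2 - w 3) * s * c)" by simp
    then show ?thesis unfolding a using gen[OF pos K, folded ee] by simp
  qed
  also have "\<dots> = FF \<nu> w \<theta>"
  proof -
    have h1: "(e+\<nu>) powr (1/2) = sqrt (e+\<nu>)" using p by (simp add: powr_half_sqrt)
    have h2: "(w 1 - e) powr (-1/2) = inverse (sqrt (w 1 - e))"
      using powr_minus[of "w 1 - e" "1/2"] p by (simp add: powr_half_sqrt)
    show ?thesis unfolding FF_def gg_def mm_def e_def[symmetric] h1 h2 by (simp add: divide_inverse)
  qed
  finally have X: "\<bar>(w 2 - w 3) * (2 * s * c)\<bar> * ((e + \<nu>) / (sqrt (e+\<nu>) * sqrt (w 1 - e) * ((w 2 - w 3) * s * c))) = FF \<nu> w \<theta>" .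
  show ?thesis unfolding e_def[symmetric] s_def[symmetric] c_def[symmetric] sR by (rule X)
qed

lemma eta_image: assumes ok: "okr \<nu> w" shows "eta w ` {0..pi/2} = {w 3..w 2}"
proof
  show "eta w ` {0..pi/2} \<subseteq> {w 3..w 2}" using eta_bounds[OF ok] by auto
next
  show "{w 3..w 2} \<subseteq> eta w ` {0..pi/2}"
  proof
    fix y assume y: "y \<in> {w 3..w 2}"
    have c: "continuous_on {0..pi/2} (eta w)" unfolding eta_def[abs_def] by (intro continuous_intros)
    have "eta w 0 = w 3" "eta w (pi/2) = w 2" by (simp_all add: eta_def)
    note e0 = this
    have pi2: "0 \<le> pi/2" using pi_gt_zero by simp
    have "\<exists>x. 0 \<le> x \<and> x \<le> pi/2 \<and> eta w x = y"
      by (rule IVT'[OF _ _ pi2 c]) (use y e0 in auto)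
    then obtain x where x: "x \<in> {0..pi/2}" and xy: "eta w x = y" by auto
    show "y \<in> eta w ` {0..pi/2}" unfolding xy[symmetric] using x by (rule imageI)
  qed
qed

lemma eta_inj: assumes ok: "okr \<nu> w" shows "inj_on (eta w) {0..pi/2}"
proof (rule inj_onI)
  fix x y assume x: "x \<in> {0..pi/2}" and y: "y \<in> {0..pi/2}" and e: "eta w x = eta w y"
  have d: "w 2 - w 3 \<noteq> 0" using ok by (simp add: okr_def)
  have "(sin x)^2 = (sin y)^2" using e d by (simp add: eta_def)
  moreover have "sin x \<ge> 0" "sin y \<ge> 0" using x y by (auto intro!: sin_ge_zero)
  ultimately have "sin x = sin y" by (simp add: power2_eq_iff_nonneg)
  moreover have "- (pi/2) \<le> x" "x \<le> pi/2" "- (pi/2) \<le> y" "y \<le> pi/2" using x y pi_gt_zero by auto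
  ultimately show "x = y" using sin_inj_pi[of x y] by blast
qed

lemma Ivec_eq: assumes ok: "okr \<nu> w" shows "Ivec \<nu> w = JJ \<nu> w"
proof -
  define G where "G = (\<lambda>\<eta>. (\<eta> + \<nu>) / sqrt ((\<eta> + \<nu>) * (w 1 - \<eta>) * (w 2 - \<eta>) * (\<eta> - w 3)))"
  define H where "H = (\<lambda>\<theta>. \<bar>(w 2 - w 3) * (2 * sin \<theta> * cos \<theta>)\<bar> * G (eta w \<theta>))"
  have iF: "FF \<nu> w integrable_on {0..pi/2}" by (rule integrable_continuous_real[OF cont_FF[OF ok]])
  have neg: "negligible {0, pi/2::real}" by simp
  have eqH: "H x = FF \<nu> w x" if "x \<in> {0..pi/2} - {0, pi/2}" for x
    using that pointwise_sub[OF ok, of x] unfolding H_def G_def by auto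
  have iH: "H integrable_on {0..pi/2}" by (rule integrable_spike[OF iF neg eqH])
  have H0: "0 \<le> H x" if "x \<in> {0..pi/2}" for x
  proof -
    have "w 3 \<le> eta w x" "eta w x \<le> w 2" using eta_bounds[OF ok] by auto
    moreover have "eta w x + \<nu> > 0" "w 1 - eta w x > 0" using eta_pos[OF ok] by auto
    ultimately show ?thesis unfolding H_def G_def by (intro mult_nonneg_nonneg divide_nonneg_nonneg) auto
  qed
  have aH: "H absolutely_integrable_on {0..pi/2}" by (rule nonnegative_absolutely_integrable_1[OF iH H0])
  have intH: "integral {0..pi/2} H = JJ \<nu> w" unfolding JJ_def
    by (rule integral_spike[OF neg, symmetric]) (rule eqH)
  have der: "(eta w has_field_derivative (w 2 - w 3) * (2 * sin x * cos x)) (at x within {0..pi/2})" for x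
    by (rule has_field_derivative_at_within) (rule deta)
  have "G absolutely_integrable_on (eta w ` {0..pi/2}) \<and> integral (eta w ` {0..pi/2}) G = JJ \<nu> w"
    using has_absolute_integral_change_of_variables_1'[of "{0..pi/2}" "eta w" "\<lambda>x. (w 2 - w 3) * (2 * sin x * cos x)" G "JJ \<nu> w", OF _ der eta_inj[OF ok]]
      aH intH unfolding H_def by auto
  then have "integral {w 3..w 2} G = JJ \<nu> w" unfolding eta_image[OF ok] by simp
  then show ?thesis unfolding Ivec_def Iint_def G_def .
qed

lemma Ji_ne0: assumes ok: "okr \<nu> w" and k: "k \<in> {1,2,3::nat}" shows "Ji \<nu> w k \<noteq> 0"
proof -
  have c0: "continuous_on {0..pi/2} (\<lambda>x. 0::real)" by simp
  have cF: "continuous_on {0..pi/2} (dF \<nu> w k)" by (rule cont_dF1[OF ok])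
  have ne: "{0<..<pi/2::real} \<noteq> {}"
  proof -
    have "pi/4 \<in> {0<..<pi/2}" using pi_gt_zero by auto
    then show ?thesis by blast
  qed
  have mpos: "mm \<nu> a b (w 1) (eta w x) > 0" for a b x
    using eta_pos[OF ok, of x] by (simp add: mm_def)
  have gepos: "ge \<nu> (w 1) (eta w x) > 0" for x unfolding ge_def using mpos[of "-1/2" "-1/2" x] mpos[of "1/2" "-3/2" x] by simp
  consider "k=1" | "k=2" | "k=3" using k by auto
  then show ?thesis
  proof cases
    case 1
    have "integral {0..pi/2} (dF \<nu> w k) < integral {0..pi/2} (\<lambda>x. 0)"
      apply (rule integral_less_real[OF cF c0 ne])
      using 1 mpos[of "1/2" "-3/2"] by (simp add: dF_def gx_def)
    then show ?thesis by (simp add: Ji_def)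
  next
    case 2
    have "integral {0..pi/2} (\<lambda>x. 0) < integral {0..pi/2} (dF \<nu> w k)"
    proof (rule integral_less_real[OF c0 cF ne])
      fix x assume x: "x \<in> {0<..<pi/2}"
      have "sin x > 0" using x by (intro sin_gt_zero) auto
      then show "0 < dF \<nu> w k x" using 2 gepos[of x] by (simp add: dF_def)
    qed
    then show ?thesis by (simp add: Ji_def)
  next
    case 3
    have "integral {0..pi/2} (\<lambda>x. 0) < integral {0..pi/2} (dF \<nu> w k)"
    proof (rule integral_less_real[OF c0 cF ne])
      fix x assume x: "x \<in> {0<..<pi/2}"
      have "cos x > 0" using x by (intro cos_gt_zero) auto
      then have "1 - (sin x)^2 > 0" by (simp add: cos_squared_eq[symmetric])
      then show "0 < dF \<nu> w k x" using 3 gepos[of x] by (simp add: dF_def)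
    qed
    then show ?thesis by (simp add: Ji_def)
  qed
qed

lemma alg:
  fixes I Ii Ij Iij d g :: real
  assumes "I \<noteq> 0" "Ii \<noteq> 0" "Ij \<noteq> 0" "Ii \<noteq> Ij" "d \<noteq> 0" "2*d*Iij = Ii - Ij"
  shows "(1 - (Ij*Ii - I*Iij)/(Ii*Ii)) / ((g - I/Ii) - (g - I/Ij)) = (1/2)*(((g - I/Ii) - g) - 2*d)/(((g - I/Ij) - g)*d)"
proof -
  have e: "Iij = (Ii - Ij)/(2*d)" using assms by (simp add: field_simps)
  have ne: "Ij - Ii \<noteq> 0" "Ii - Ij \<noteq> 0" using assms by auto
  show ?thesis unfolding e using assms ne by (simp add: field_simps)
qed

lemma ev_ok: assumes ok: "okr \<nu> w" and k: "k \<in> {1,2,3::nat}"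
  shows "eventually (\<lambda>t. okr \<nu> (w(k:=t))) (nhds (w k))"
proof -
  obtain \<delta> where \<delta>: "\<delta> > 0" and h\<delta>: "\<And>t. \<bar>t - w k\<bar> < \<delta> \<Longrightarrow> okr \<nu> (w(k:=t))"
    using ok_ball[OF ok k] by blast
  have "eventually (\<lambda>t. t \<in> ball (w k) \<delta>) (nhds (w k))"
    by (rule eventually_nhds_in_open) (use \<delta> in auto)
  then show ?thesis
    by eventually_elim (auto intro!: h\<delta> simp: dist_real_def abs_minus_commute)
qed

lemma pderiv_Ivec: assumes ok: "okr \<nu> w" and k: "k \<in> {1,2,3::nat}"
  shows "pderiv_at (Ivec \<nu>) w k = Ji \<nu> w k"
proof -
  have "eventually (\<lambda>t. Ivec \<nu> (w(k:=t)) = JJ \<nu> (w(k:=t))) (nhds (w k))"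
    using ev_ok[OF ok k] by eventually_elim (rule Ivec_eq)
  then have "deriv (\<lambda>t. Ivec \<nu> (w(k:=t))) (w k) = deriv (\<lambda>t. JJ \<nu> (w(k:=t))) (w k)"
    by (rule deriv_cong_ev) simp
  also have "\<dots> = Ji \<nu> w k" by (rule DERIV_imp_deriv[OF DJ[OF ok k]])
  finally show ?thesis unfolding pderiv_at_def .
qed

lemma lam_eq: assumes ok: "okr \<nu> w" and k: "k \<in> {1,2,3::nat}"
  shows "lam \<nu> w k = w 1 + w 2 + w 3 + 2 * \<nu> - JJ \<nu> w / Ji \<nu> w k"
  unfolding lam_def pderiv_Ivec[OF ok k] Ivec_eq[OF ok] ..

lemma dgam: assumes j: "j \<in> {1,2,3::nat}"
  shows "((\<lambda>t. (u(j:=t)) 1 + (u(j:=t)) 2 + (u(j:=t)) 3 + 2 * \<nu>) has_real_derivative 1) (at (u j))"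
  using j by (auto intro!: derivative_eq_intros)

theorem lemma2p3:
  fixes \<nu> :: real and u :: "nat \<Rightarrow> real" and i j :: nat
  assumes "- \<nu> < u 3" and "u 3 < u 2" and "u 2 < u 1"
    and "i \<in> {1,2,3}" and "j \<in> {1,2,3}" and "i \<noteq> j"
    and "lam \<nu> u i \<noteq> lam \<nu> u j"
  shows "pderiv_at (\<lambda>v. lam \<nu> v i) u j / (lam \<nu> u i - lam \<nu> u j)
     = (1/2) * ((lam \<nu> u i - (u 1 + u 2 + u 3 + 2 * \<nu>)) - 2 * (u i - u j))
       / ((lam \<nu> u j - (u 1 + u 2 + u 3 + 2 * \<nu>)) * (u i - u j))"
proof -
  have ok: "okr \<nu> u" using assms(1-3) by (simp add: okr_def)
  note i = assms(4) and j = assms(5) and ij = assms(6)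
  define g where "g = u 1 + u 2 + u 3 + 2 * \<nu>"
  define I where "I = JJ \<nu> u"
  define Ii where "Ii = Ji \<nu> u i"
  define Ij where "Ij = Ji \<nu> u j"
  define Iij where "Iij = integral {0..pi/2} (ddF \<nu> u i j)"
  have li: "lam \<nu> u i = g - I/Ii" unfolding g_def I_def Ii_def by (rule lam_eq[OF ok i])
  have lj: "lam \<nu> u j = g - I/Ij" unfolding g_def I_def Ij_def by (rule lam_eq[OF ok j])
  have Ii0: "Ii \<noteq> 0" unfolding Ii_def by (rule Ji_ne0[OF ok i])
  have Ij0: "Ij \<noteq> 0" unfolding Ij_def by (rule Ji_ne0[OF ok j])
  have I0: "I \<noteq> 0" using assms(7) li lj by auto
  have Iij: "Ii \<noteq> Ij" using assms(7) li lj by auto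
  have d0: "u i - u j \<noteq> 0" using i j ij assms(1-3) by auto
  have epd: "2*(u i - u j) * Iij = Ii - Ij" unfolding Iij_def Ii_def Ij_def by (rule EPD[OF ok i j ij])
  have "eventually (\<lambda>t. lam \<nu> (u(j:=t)) i = ((u(j:=t)) 1 + (u(j:=t)) 2 + (u(j:=t)) 3 + 2 * \<nu>) - JJ \<nu> (u(j:=t)) / Ji \<nu> (u(j:=t)) i) (nhds (u j))"
    using ev_ok[OF ok j] by eventually_elim (rule lam_eq[OF _ i])
  then have "pderiv_at (\<lambda>v. lam \<nu> v i) u j = deriv (\<lambda>t. ((u(j:=t)) 1 + (u(j:=t)) 2 + (u(j:=t)) 3 + 2 * \<nu>) - JJ \<nu> (u(j:=t)) / Ji \<nu> (u(j:=t)) i) (u j)"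
    unfolding pderiv_at_def by (rule deriv_cong_ev) simp
  also have "\<dots> = 1 - (Ij * Ii - I * Iij) / (Ii * Ii)"
  proof (rule DERIV_imp_deriv)
    have "((\<lambda>t. JJ \<nu> (u(j:=t)) / Ji \<nu> (u(j:=t)) i) has_real_derivative (Ij * Ii - I * Iij) / (Ii * Ii)) (at (u j))"
      using DERIV_divide[OF DJ[OF ok j] DJi[OF ok i j ij]] Ii0 unfolding I_def Ii_def Ij_def Iij_def by simp
    then show "((\<lambda>t. ((u(j:=t)) 1 + (u(j:=t)) 2 + (u(j:=t)) 3 + 2 * \<nu>) - JJ \<nu> (u(j:=t)) / Ji \<nu> (u(j:=t)) i) has_real_derivative 1 - (Ij * Ii - I * Iij) / (Ii * Ii)) (at (u j))"
      by (intro DERIV_diff dgam j)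
  qed
  finally have pd: "pderiv_at (\<lambda>v. lam \<nu> v i) u j = 1 - (Ij * Ii - I * Iij) / (Ii * Ii)" .
  show ?thesis unfolding pd li lj g_def[symmetric]
    by (rule alg[OF I0 Ii0 Ij0 Iij d0 epd])
qed

end
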